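(* Let $D$ be a division algebra and let $\sigma_1,\sigma_2$ be two commuting automorphisms of $D$. If $\sigma_1^{k_1}\circ\sigma_2^{-k_2}$ is not an inner automorphism of $D$ for any positive integers $k_1,k_2$, then the tuple $(\sigma_1,\sigma_2)$ is not automorphically normalizable over $D$.
   Context: All rings are associative with unity. An inner automorphism of $D$ is a map $r\mapsto crc^{-1}$ with $c\in D^\times$. $D[t_1,t_2;\sigma_1,\sigma_2]$ is the skew polynomial ring in two commuting variables with $t_ia=\sigma_i(a)t_i$ for $a\in D$. For a ring $S\supseteq D$, $a\in S$ is automorphic over $D$ with respect to $\tau$ if $ab=\tau(b)a$ for all $b\in D$. Commuting $a_1,\ldots,a_m\in S$ are (left) algebraically independent over $D$ if monomials in them are left linearly independent over $D$. $S$ is automorphically normalizable over $D$ if there exist $m\ge0$ and commuting $a_1,\ldots,a_m\in S$, automorphic over $D$ with respect to pairwise commuting automorphisms, left algebraically independent over $D$, such that $S$ is finitely generated as a left module over the subring $D[a_1,\ldots,a_m]$ generated by $D\cup\{a_1,\ldots,a_m\}$. The tuple $(\sigma_1,\sigma_2)$ is automorphically normalizable over $D$ if every quotient of $D[t_1,t_2;\sigma_1,\sigma_2]$ by a proper two-sided ideal is automorphically normalizable over $D$. *)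

theory Defs
  imports "HOL-Algebra.Algebra"
begin

definition ring_automorphism :: "('a::division_ring \<Rightarrow> 'a) \<Rightarrow> bool" where
  "ring_automorphism f \<longleftrightarrow> bij f \<and> (\<forall>x y. f (x + y) = f x + f y)
     \<and> (\<forall>x y. f (x * y) = f x * f y) \<and> f 1 = 1"

definition inner_automorphism :: "('a::division_ring \<Rightarrow> 'a) \<Rightarrow> bool" where
  "inner_automorphism f \<longleftrightarrow> (\<exists>c. c \<noteq> 0 \<and> (\<forall>r. f r = c * r * inverse c))"

text \<open>Elements are finitely supported coefficient functions on exponent pairs (i,j),
  representing sums of a * t1^i * t2^j, with t_k a = s_k(a) t_k.\<close>

definition skew_poly2 ::
  "('a::division_ring \<Rightarrow> 'a) \<Rightarrow> ('a \<Rightarrow> 'a) \<Rightarrow> (nat \<times> nat \<Rightarrow> 'a) ring" where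
  "skew_poly2 s1 s2 =
    \<lparr> carrier = {p. finite {x. p x \<noteq> 0}},
      monoid.mult = (\<lambda>p q (n1, n2). \<Sum>(i, j) \<in> {0..n1} \<times> {0..n2}.
                 p (i, j) * (s1 ^^ i) ((s2 ^^ j) (q (n1 - i, n2 - j)))),
      monoid.one = (\<lambda>x. if x = (0, 0) then 1 else 0),
      ring.zero = (\<lambda>_. 0),
      ring.add = (\<lambda>p q x. p x + q x) \<rparr>"

definition skew_const :: "'a::zero \<Rightarrow> (nat \<times> nat \<Rightarrow> 'a)" where
  "skew_const d = (\<lambda>x. if x = (0, 0) then d else 0)"

definition automorphic_over ::
  "('b, 'c) ring_scheme \<Rightarrow> ('a \<Rightarrow> 'b) \<Rightarrow> ('a \<Rightarrow> 'a) \<Rightarrow> 'b \<Rightarrow> bool" where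
  "automorphic_over S \<iota> \<tau> x \<longleftrightarrow> (\<forall>b. x \<otimes>\<^bsub>S\<^esub> \<iota> b = \<iota> (\<tau> b) \<otimes>\<^bsub>S\<^esub> x)"

definition monomial_in :: "('b, 'c) ring_scheme \<Rightarrow> nat \<Rightarrow> (nat \<Rightarrow> 'b) \<Rightarrow> (nat \<Rightarrow> nat) \<Rightarrow> 'b" where
  "monomial_in S m a \<alpha> = finprod S (\<lambda>i. a i [^]\<^bsub>S\<^esub> \<alpha> i) {..<m}"

definition left_alg_indep ::
  "('b, 'c) ring_scheme \<Rightarrow> ('a::zero \<Rightarrow> 'b) \<Rightarrow> nat \<Rightarrow> (nat \<Rightarrow> 'b) \<Rightarrow> bool" where
  "left_alg_indep S \<iota> m a \<longleftrightarrow>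
     (\<forall>A c. finite A \<longrightarrow> A \<subseteq> {\<alpha>. \<forall>i\<ge>m. \<alpha> i = 0} \<longrightarrow>
        finsum S (\<lambda>\<alpha>. \<iota> (c \<alpha>) \<otimes>\<^bsub>S\<^esub> monomial_in S m a \<alpha>) A = \<zero>\<^bsub>S\<^esub> \<longrightarrow>
        (\<forall>\<alpha>\<in>A. c \<alpha> = 0))"

definition finitely_generated_left_module_over ::
  "('b, 'c) ring_scheme \<Rightarrow> 'b set \<Rightarrow> bool" where
  "finitely_generated_left_module_over S R0 \<longleftrightarrow>
     (\<exists>G. finite G \<and> G \<subseteq> carrier S \<and>
        (\<forall>s\<in>carrier S. \<exists>r. (\<forall>g\<in>G. r g \<in> R0) \<and> s = finsum S (\<lambda>g. r g \<otimes>\<^bsub>S\<^esub> g) G))"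

definition automorphically_normalizable ::
  "('b, 'c) ring_scheme \<Rightarrow> ('a::division_ring \<Rightarrow> 'b) \<Rightarrow> bool" where
  "automorphically_normalizable S \<iota> \<longleftrightarrow>
     (\<exists>m a \<tau>.
        (\<forall>i<m. a i \<in> carrier S) \<and>
        (\<forall>i<m. \<forall>j<m. a i \<otimes>\<^bsub>S\<^esub> a j = a j \<otimes>\<^bsub>S\<^esub> a i) \<and>
        (\<forall>i<m. ring_automorphism (\<tau> i)) \<and>
        (\<forall>i<m. \<forall>j<m. \<tau> i \<circ> \<tau> j = \<tau> j \<circ> \<tau> i) \<and>
        (\<forall>i<m. automorphic_over S \<iota> (\<tau> i) (a i)) \<and>
        left_alg_indep S \<iota> m a \<and>
        finitely_generated_left_module_over S
          (generate_ring S (\<iota> ` UNIV \<union> a ` {..<m})))"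

definition aut_normalizable_pair :: "('a::division_ring \<Rightarrow> 'a) \<Rightarrow> ('a \<Rightarrow> 'a) \<Rightarrow> bool" where
  "aut_normalizable_pair s1 s2 \<longleftrightarrow>
     (\<forall>I. ideal I (skew_poly2 s1 s2) \<and> I \<noteq> carrier (skew_poly2 s1 s2) \<longrightarrow>
        automorphically_normalizable (skew_poly2 s1 s2 Quot I)
          (\<lambda>d. I +>\<^bsub>skew_poly2 s1 s2\<^esub> skew_const d))"

end

theory Submission
  imports Defs
begin

lemma funpow_hom_add:
  fixes f :: "'a::plus \<Rightarrow> 'a"
  assumes "\<And>x y. f (x + y) = f x + f y"
  shows "(f ^^ n) (x + y) = (f ^^ n) x + (f ^^ n) y"
  by (induction n arbitrary: x y) (simp_all add: assms)

lemma funpow_hom_mult: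
  fixes f :: "'a::times \<Rightarrow> 'a"
  assumes "\<And>x y. f (x * y) = f x * f y"
  shows "(f ^^ n) (x * y) = (f ^^ n) x * (f ^^ n) y"
  by (induction n arbitrary: x y) (simp_all add: assms)

lemma hom_zero_gen:
  fixes f :: "'a::ring \<Rightarrow> 'a"
  assumes "\<And>x y. f (x + y) = f x + f y"
  shows "f 0 = 0"
  using assms[of 0 0] by simp

lemma hom_sum_gen:
  fixes f :: "'a::ring \<Rightarrow> 'a"
  assumes "\<And>x y. f (x + y) = f x + f y"
  shows "f (sum g A) = (\<Sum>x\<in>A. f (g x))"
proof (cases "finite A")
  case True
  then show ?thesis
  proof (induction A rule: finite_induct)
    case empty
    then show ?case by (simp add: hom_zero_gen[OF assms])
  next
    case (insert x F)
    then show ?case by (simp add: assms)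
  qed
next
  case False
  then show ?thesis by (simp add: hom_zero_gen[OF assms])
qed

lemma funpow_comm_gen:
  assumes "f \<circ> g = g \<circ> f"
  shows "(f ^^ i) ((g ^^ j) x) = (g ^^ j) ((f ^^ i) x)"
proof -
  have c: "f (g x) = g (f x)" for x using assms by (metis comp_apply)
  have c1: "f ((g ^^ j) x) = (g ^^ j) (f x)" for x
    by (induction j) (auto simp: c)
  show ?thesis by (induction i) (auto simp: c1)
qed

lemma tri_reindex:
  fixes g :: "nat \<Rightarrow> nat \<Rightarrow> 'b::comm_monoid_add"
  shows "(\<Sum>i\<in>{0..n}. \<Sum>k\<in>{0..i}. g k i) = (\<Sum>k\<in>{0..n}. \<Sum>u\<in>{0..n-k}. g k (k+u))"
proof (induction n)
  case 0
  then show ?case by simp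
next
  case (Suc n)
  have "(\<Sum>k\<in>{0..Suc n}. \<Sum>u\<in>{0..Suc n-k}. g k (k+u))
      = (\<Sum>k\<in>{0..n}. \<Sum>u\<in>{0..Suc n-k}. g k (k+u)) + g (Suc n) (Suc n)"
    by simp
  also have "(\<Sum>k\<in>{0..n}. \<Sum>u\<in>{0..Suc n-k}. g k (k+u))
      = (\<Sum>k\<in>{0..n}. (\<Sum>u\<in>{0..n-k}. g k (k+u)) + g k (Suc n))"
  proof (rule sum.cong)
    fix k assume "k \<in> {0..n}"
    then have "Suc n - k = Suc (n - k)" by auto
    then show "(\<Sum>u\<in>{0..Suc n-k}. g k (k+u)) = (\<Sum>u\<in>{0..n-k}. g k (k+u)) + g k (Suc n)"
      using \<open>k \<in> {0..n}\<close> by simp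
  qed simp
  finally show ?case using Suc by (simp add: sum.distrib add.assoc)
qed

locale skewctx =
  fixes s1 s2 :: "'a::division_ring \<Rightarrow> 'a"
  assumes add1: "\<And>x y. s1 (x + y) = s1 x + s1 y"
    and mul1: "\<And>x y. s1 (x * y) = s1 x * s1 y"
    and add2: "\<And>x y. s2 (x + y) = s2 x + s2 y"
    and mul2: "\<And>x y. s2 (x * y) = s2 x * s2 y"
    and one1: "s1 1 = 1" and one2: "s2 1 = 1"
    and comm12: "s1 \<circ> s2 = s2 \<circ> s1"
begin

definition th :: "nat \<Rightarrow> nat \<Rightarrow> 'a \<Rightarrow> 'a" where
  "th i j x = (s1 ^^ i) ((s2 ^^ j) x)"

lemma th_add: "th i j (x + y) = th i j x + th i j y"
  unfolding th_def by (simp add: funpow_hom_add add1 add2)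

lemma th_mult: "th i j (x * y) = th i j x * th i j y"
  unfolding th_def by (simp add: funpow_hom_mult mul1 mul2)

lemma th_zero[simp]: "th i j 0 = 0"
  using hom_zero_gen[of "th i j"] th_add by blast

lemma s1pow_zero[simp]: "(s1 ^^ i) 0 = 0"
  using th_zero[of i 0] unfolding th_def by simp

lemma s2pow_zero[simp]: "(s2 ^^ j) 0 = 0"
  using th_zero[of 0 j] unfolding th_def by simp

lemma th_neg: "th i j (- x) = - th i j x"
  using th_add[of i j x "-x"] by (simp add: add_eq_0_iff2)

lemma th_one[simp]: "th i j 1 = 1"
proof -
  have a: "(f ^^ n) 1 = 1" if "f 1 = 1" for f :: "'a \<Rightarrow> 'a" and n
    using that by (induction n) auto
  show ?thesis unfolding th_def by (simp add: a one1 one2)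
qed

lemma th_sum: "th i j (sum g A) = (\<Sum>x\<in>A. th i j (g x))"
  by (rule hom_sum_gen) (rule th_add)

lemma th_00[simp]: "th 0 0 x = x"
  unfolding th_def by simp

lemma th_th: "th i j (th k l x) = th (i + k) (j + l) x"
proof -
  have "(s2 ^^ j) ((s1 ^^ k) y) = (s1 ^^ k) ((s2 ^^ j) y)" for y
    using funpow_comm_gen[OF comm12] by metis
  then show ?thesis unfolding th_def by (simp add: funpow_add)
qed

abbreviation R where "R \<equiv> skew_poly2 s1 s2"

lemma R_simps:
  "carrier R = {p. finite {x. p x \<noteq> 0}}"
  "p \<otimes>\<^bsub>R\<^esub> q = (\<lambda>(n1, n2). \<Sum>(i, j) \<in> {0..n1} \<times> {0..n2}. p (i, j) * th i j (q (n1 - i, n2 - j)))"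
  "\<one>\<^bsub>R\<^esub> = (\<lambda>x. if x = (0, 0) then 1 else 0)"
  "\<zero>\<^bsub>R\<^esub> = (\<lambda>_. 0)"
  "p \<oplus>\<^bsub>R\<^esub> q = (\<lambda>x. p x + q x)"
  unfolding skew_poly2_def th_def by simp_all

lemma mult_at: "(p \<otimes>\<^bsub>R\<^esub> q) (n1, n2) = (\<Sum>i\<in>{0..n1}. \<Sum>j\<in>{0..n2}. p (i, j) * th i j (q (n1 - i, n2 - j)))"
  unfolding R_simps by (simp add: sum.cartesian_product)


lemma fin_bound:
  fixes p :: "nat \<times> nat \<Rightarrow> 'a"
  assumes "finite {x. p x \<noteq> 0}"
  shows "\<exists>M. \<forall>i j. p (i, j) \<noteq> 0 \<longrightarrow> i \<le> M \<and> j \<le> M"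
proof -
  let ?S = "{x. p x \<noteq> 0}"
  have "finite (fst ` ?S \<union> snd ` ?S)" using assms by simp
  then obtain M where M: "\<forall>n\<in>fst ` ?S \<union> snd ` ?S. n \<le> M"
    using finite_nat_set_iff_bounded_le by blast
  show ?thesis
  proof (intro exI allI impI)
    fix i j assume "p (i, j) \<noteq> 0"
    then have ij: "(i, j) \<in> ?S" by simp
    have "i \<in> fst ` ?S" using image_eqI[OF _ ij, of i fst] by simp
    moreover have "j \<in> snd ` ?S" using image_eqI[OF _ ij, of j snd] by simp
    ultimately show "i \<le> M \<and> j \<le> M" using M by blast
  qed
qed

lemma bound_fin:
  fixes p :: "nat \<times> nat \<Rightarrow> 'a"
  assumes "\<forall>i j. p (i, j) \<noteq> 0 \<longrightarrow> i \<le> (M::nat) \<and> j \<le> M"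
  shows "finite {x. p x \<noteq> 0}"
proof (rule finite_subset)
  show "{x. p x \<noteq> 0} \<subseteq> {0..M} \<times> {0..M}"
  proof
    fix x assume "x \<in> {x. p x \<noteq> 0}"
    moreover obtain i j where "x = (i, j)" by fastforce
    ultimately show "x \<in> {0..M} \<times> {0..M}" using assms by simp
  qed
qed simp

lemma mult_closed:
  assumes "p \<in> carrier R" "q \<in> carrier R"
  shows "p \<otimes>\<^bsub>R\<^esub> q \<in> carrier R"
proof -
  obtain M where M: "\<forall>i j. p (i, j) \<noteq> 0 \<longrightarrow> i \<le> M \<and> j \<le> M"
    using fin_bound assms(1) unfolding R_simps by blast
  obtain N where N: "\<forall>i j. q (i, j) \<noteq> 0 \<longrightarrow> i \<le> N \<and> j \<le> N"
    using fin_bound assms(2) unfolding R_simps by blast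
  have "\<forall>n1 n2. (p \<otimes>\<^bsub>R\<^esub> q) (n1, n2) \<noteq> 0 \<longrightarrow> n1 \<le> M + N \<and> n2 \<le> M + N"
  proof (intro allI impI, rule ccontr)
    fix n1 n2 assume ne: "(p \<otimes>\<^bsub>R\<^esub> q) (n1, n2) \<noteq> 0" and "\<not> (n1 \<le> M + N \<and> n2 \<le> M + N)"
    then have big: "n1 > M + N \<or> n2 > M + N" by auto
    have z: "p (i, j) * th i j (q (n1 - i, n2 - j)) = 0" for i j
    proof (cases "p (i, j) = 0")
      case False
      then have "i \<le> M" "j \<le> M" using M by auto
      then have "q (n1 - i, n2 - j) = 0" using N big by fastforce
      then show ?thesis by simp
    qed simp
    have "(p \<otimes>\<^bsub>R\<^esub> q) (n1, n2) = 0" unfolding mult_at by (simp only: z sum.neutral_const)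
    then show False using ne by simp
  qed
  then show ?thesis unfolding R_simps(1) by (intro CollectI bound_fin) blast
qed

lemma l_one_R: "\<one>\<^bsub>R\<^esub> \<otimes>\<^bsub>R\<^esub> q = q"
proof (rule ext, clarify)
  fix n1 n2
  have "(\<one>\<^bsub>R\<^esub> \<otimes>\<^bsub>R\<^esub> q) (n1, n2) = (\<Sum>i\<in>{0..n1}. \<Sum>j\<in>{0..n2}.
        (if i = 0 then (if j = 0 then q (n1, n2) else 0) else 0))"
    unfolding mult_at by (intro sum.cong refl) (auto simp: R_simps)
  also have "\<dots> = (\<Sum>i\<in>{0..n1}. (if i = 0 then q (n1, n2) else 0))"
    by (intro sum.cong refl) simp
  also have "\<dots> = q (n1, n2)" by simp
  finally show "(\<one>\<^bsub>R\<^esub> \<otimes>\<^bsub>R\<^esub> q) (n1, n2) = q (n1, n2)" .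
qed

lemma r_one_R: "p \<otimes>\<^bsub>R\<^esub> \<one>\<^bsub>R\<^esub> = p"
proof (rule ext, clarify)
  fix n1 n2
  have "(p \<otimes>\<^bsub>R\<^esub> \<one>\<^bsub>R\<^esub>) (n1, n2) = (\<Sum>i\<in>{0..n1}. \<Sum>j\<in>{0..n2}.
        (if i = n1 then (if j = n2 then p (n1, n2) else 0) else 0))"
    unfolding mult_at by (intro sum.cong refl) (auto simp: R_simps)
  also have "\<dots> = (\<Sum>i\<in>{0..n1}. (if i = n1 then p (n1, n2) else 0))"
    by (intro sum.cong refl) simp
  also have "\<dots> = p (n1, n2)" by simp
  finally show "(p \<otimes>\<^bsub>R\<^esub> \<one>\<^bsub>R\<^esub>) (n1, n2) = p (n1, n2)" .
qed

lemma assoc_R: "(p \<otimes>\<^bsub>R\<^esub> q) \<otimes>\<^bsub>R\<^esub> r = p \<otimes>\<^bsub>R\<^esub> (q \<otimes>\<^bsub>R\<^esub> r)"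
proof (rule ext, clarify)
  fix n1 n2
  define F where "F k l i j = p (k, l) * th k l (q (i - k, j - l)) * th i j (r (n1 - i, n2 - j))" for k l i j
  have "((p \<otimes>\<^bsub>R\<^esub> q) \<otimes>\<^bsub>R\<^esub> r) (n1, n2)
      = (\<Sum>i\<in>{0..n1}. \<Sum>j\<in>{0..n2}. \<Sum>k\<in>{0..i}. \<Sum>l\<in>{0..j}. F k l i j)"
    unfolding mult_at F_def by (simp add: sum_distrib_right)
  also have "\<dots> = (\<Sum>i\<in>{0..n1}. \<Sum>k\<in>{0..i}. \<Sum>j\<in>{0..n2}. \<Sum>l\<in>{0..j}. F k l i j)"
    by (rule sum.cong[OF refl], rule sum.swap)
  also have "\<dots> = (\<Sum>k\<in>{0..n1}. \<Sum>u\<in>{0..n1-k}. \<Sum>j\<in>{0..n2}. \<Sum>l\<in>{0..j}. F k l (k+u) j)"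
    by (rule tri_reindex[of "\<lambda>k i. \<Sum>j\<in>{0..n2}. \<Sum>l\<in>{0..j}. F k l i j"])
  also have "\<dots> = (\<Sum>k\<in>{0..n1}. \<Sum>u\<in>{0..n1-k}. \<Sum>l\<in>{0..n2}. \<Sum>v\<in>{0..n2-l}. F k l (k+u) (l+v))"
    by (rule sum.cong[OF refl], rule sum.cong[OF refl], rule tri_reindex[of "\<lambda>l j. F _ l _ j"])
  also have "\<dots> = (\<Sum>k\<in>{0..n1}. \<Sum>l\<in>{0..n2}. \<Sum>u\<in>{0..n1-k}. \<Sum>v\<in>{0..n2-l}. F k l (k+u) (l+v))"
    by (rule sum.cong[OF refl], rule sum.swap)
  also have "\<dots> = (\<Sum>k\<in>{0..n1}. \<Sum>l\<in>{0..n2}. p (k, l) * th k l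
       (\<Sum>u\<in>{0..n1-k}. \<Sum>v\<in>{0..n2-l}. q (u, v) * th u v (r (n1 - k - u, n2 - l - v))))"
  proof (rule sum.cong[OF refl], rule sum.cong[OF refl])
    fix k l
    have "p (k, l) * th k l
       (\<Sum>u\<in>{0..n1-k}. \<Sum>v\<in>{0..n2-l}. q (u, v) * th u v (r (n1 - k - u, n2 - l - v)))
      = (\<Sum>u\<in>{0..n1-k}. \<Sum>v\<in>{0..n2-l}. p (k, l) * th k l (q (u, v) * th u v (r (n1 - k - u, n2 - l - v))))"
      by (simp only: th_sum sum_distrib_left)
    also have "\<dots> = (\<Sum>u\<in>{0..n1-k}. \<Sum>v\<in>{0..n2-l}. F k l (k+u) (l+v))"
      unfolding F_def th_mult th_th by (simp add: mult.assoc diff_diff_add)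
    finally show "(\<Sum>u\<in>{0..n1-k}. \<Sum>v\<in>{0..n2-l}. F k l (k+u) (l+v)) = p (k, l) * th k l
       (\<Sum>u\<in>{0..n1-k}. \<Sum>v\<in>{0..n2-l}. q (u, v) * th u v (r (n1 - k - u, n2 - l - v)))" by simp
  qed
  also have "\<dots> = (p \<otimes>\<^bsub>R\<^esub> (q \<otimes>\<^bsub>R\<^esub> r)) (n1, n2)"
    by (simp only: mult_at)
  finally show "((p \<otimes>\<^bsub>R\<^esub> q) \<otimes>\<^bsub>R\<^esub> r) (n1, n2) = (p \<otimes>\<^bsub>R\<^esub> (q \<otimes>\<^bsub>R\<^esub> r)) (n1, n2)" .
qed

lemma ldistr_R: "(x \<oplus>\<^bsub>R\<^esub> y) \<otimes>\<^bsub>R\<^esub> z = x \<otimes>\<^bsub>R\<^esub> z \<oplus>\<^bsub>R\<^esub> y \<otimes>\<^bsub>R\<^esub> z"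
  by (rule ext, clarify) (simp only: mult_at R_simps(5) distrib_right sum.distrib split)

lemma rdistr_R: "z \<otimes>\<^bsub>R\<^esub> (x \<oplus>\<^bsub>R\<^esub> y) = z \<otimes>\<^bsub>R\<^esub> x \<oplus>\<^bsub>R\<^esub> z \<otimes>\<^bsub>R\<^esub> y"
  by (rule ext, clarify) (simp only: mult_at R_simps(5) distrib_left sum.distrib th_add split)

lemma ring_R: "ring R"
proof (rule ringI)
  show "abelian_group R"
  proof (rule abelian_groupI)
    fix x y assume "x \<in> carrier R" "y \<in> carrier R"
    then show "x \<oplus>\<^bsub>R\<^esub> y \<in> carrier R"
    proof -
      have "{a. x a + y a \<noteq> 0} \<subseteq> {a. x a \<noteq> 0} \<union> {a. y a \<noteq> 0}" by auto
      then show ?thesis using \<open>x \<in> carrier R\<close> \<open>y \<in> carrier R\<close>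
        unfolding R_simps by (auto intro: finite_subset)
    qed
  next
    show "\<zero>\<^bsub>R\<^esub> \<in> carrier R" unfolding R_simps by simp
  next
    fix x y z show "(x \<oplus>\<^bsub>R\<^esub> y) \<oplus>\<^bsub>R\<^esub> z = x \<oplus>\<^bsub>R\<^esub> (y \<oplus>\<^bsub>R\<^esub> z)"
      unfolding R_simps by (simp add: add.assoc)
  next
    fix x y show "x \<oplus>\<^bsub>R\<^esub> y = y \<oplus>\<^bsub>R\<^esub> x"
      unfolding R_simps by (simp add: add.commute)
  next
    fix x show "\<zero>\<^bsub>R\<^esub> \<oplus>\<^bsub>R\<^esub> x = x" unfolding R_simps by simp
  next
    fix x assume "x \<in> carrier R"
    then show "\<exists>y\<in>carrier R. y \<oplus>\<^bsub>R\<^esub> x = \<zero>\<^bsub>R\<^esub>"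
      unfolding R_simps by (intro bexI[of _ "\<lambda>n. - x n"]) auto
  qed
next
  show "monoid R"
  proof (rule monoidI)
    show "\<one>\<^bsub>R\<^esub> \<in> carrier R" unfolding R_simps(1)
      by (rule CollectI, rule finite_subset[of _ "{(0,0)}"]) (auto simp: R_simps)
  qed (simp_all add: mult_closed assoc_R l_one_R r_one_R)
qed (simp_all add: ldistr_R rdistr_R)


definition onax :: "nat \<times> nat \<Rightarrow> bool" where
  "onax x \<longleftrightarrow> fst x = 0 \<or> snd x = 0"

definition Iax :: "(nat \<times> nat \<Rightarrow> 'a) set" where
  "Iax = {p \<in> carrier R. \<forall>x. onax x \<longrightarrow> p x = 0}"

definition ax :: "(nat \<times> nat \<Rightarrow> 'a) \<Rightarrow> (nat \<times> nat \<Rightarrow> 'a)" where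
  "ax p = (\<lambda>x. if onax x then p x else 0)"

lemma a_inv_R: "p \<in> carrier R \<Longrightarrow> \<ominus>\<^bsub>R\<^esub> p = (\<lambda>x. - p x)"
proof -
  assume p: "p \<in> carrier R"
  interpret ring R by (rule ring_R)
  have "(\<lambda>x. - p x) \<in> carrier R" using p unfolding R_simps by simp
  moreover have "(\<lambda>x. - p x) \<oplus>\<^bsub>R\<^esub> p = \<zero>\<^bsub>R\<^esub>" unfolding R_simps by simp
  ultimately show ?thesis using minus_equality p by blast
qed

lemma mult_axis1: "(p \<otimes>\<^bsub>R\<^esub> q) (n, 0) = (\<Sum>i\<in>{0..n}. p (i, 0) * (s1 ^^ i) (q (n - i, 0)))"
  unfolding mult_at th_def by simp

lemma mult_axis2: "(p \<otimes>\<^bsub>R\<^esub> q) (0, n) = (\<Sum>j\<in>{0..n}. p (0, j) * (s2 ^^ j) (q (0, n - j)))"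
  unfolding mult_at th_def by simp

lemma ideal_I: "ideal Iax R"
proof -
  interpret ring R by (rule ring_R)
  show ?thesis
  proof (rule idealI)
    show "ring R" by (rule ring_R)
  next
    show "subgroup Iax (add_monoid R)"
    proof (rule add.subgroupI)
      show "Iax \<subseteq> carrier R" unfolding Iax_def by auto
    next
      have "\<zero>\<^bsub>R\<^esub> \<in> Iax" unfolding Iax_def R_simps by simp
      then show "Iax \<noteq> {}" by blast
    next
      fix a assume "a \<in> Iax"
      then show "\<ominus>\<^bsub>R\<^esub> a \<in> Iax"
        unfolding Iax_def using a_inv_R by (auto simp: R_simps)
    next
      fix a b assume "a \<in> Iax" "b \<in> Iax"
      then show "a \<oplus>\<^bsub>R\<^esub> b \<in> Iax"
        unfolding Iax_def using add.m_closed by (auto simp: R_simps)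
    qed
  next
    fix a x assume a: "a \<in> Iax" and x: "x \<in> carrier R"
    show "x \<otimes>\<^bsub>R\<^esub> a \<in> Iax"
      unfolding Iax_def
    proof (intro CollectI conjI allI impI)
      show "x \<otimes>\<^bsub>R\<^esub> a \<in> carrier R" using a x mult_closed unfolding Iax_def by auto
    next
      fix y :: "nat \<times> nat" assume "onax y"
      then obtain n where "y = (n, 0) \<or> y = (0, n)" unfolding onax_def by (cases y) auto
      moreover have "a (k, 0) = 0" "a (0, k) = 0" for k using a unfolding Iax_def onax_def by auto
      ultimately show "(x \<otimes>\<^bsub>R\<^esub> a) y = 0" by (auto simp: mult_axis1 mult_axis2)
    qed
  next
    fix a x assume a: "a \<in> Iax" and x: "x \<in> carrier R"
    show "a \<otimes>\<^bsub>R\<^esub> x \<in> Iax"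
      unfolding Iax_def
    proof (intro CollectI conjI allI impI)
      show "a \<otimes>\<^bsub>R\<^esub> x \<in> carrier R" using a x mult_closed unfolding Iax_def by auto
    next
      fix y :: "nat \<times> nat" assume "onax y"
      then obtain n where "y = (n, 0) \<or> y = (0, n)" unfolding onax_def by (cases y) auto
      moreover have "a (k, 0) = 0" "a (0, k) = 0" for k using a unfolding Iax_def onax_def by auto
      ultimately show "(a \<otimes>\<^bsub>R\<^esub> x) y = 0" by (auto simp: mult_axis1 mult_axis2)
    qed
  qed
qed

lemma one_notin_I: "\<one>\<^bsub>R\<^esub> \<notin> Iax"
  unfolding Iax_def onax_def R_simps by auto

end

context skewctx
begin

abbreviation S where "S \<equiv> R Quot Iax"

abbreviation cos where "cos \<equiv> a_r_coset R Iax"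

lemma S_rep: "XX \<in> carrier S \<Longrightarrow> \<exists>p\<in>carrier R. XX = cos p"
  unfolding FactRing_def A_RCOSETS_def' by auto

lemma coset_in_S: "p \<in> carrier R \<Longrightarrow> cos p \<in> carrier S"
  unfolding FactRing_def A_RCOSETS_def' by auto

lemma ring_S: "ring S"
  by (rule ideal.quotient_is_ring[OF ideal_I])

lemma hom_S': "cos \<in> ring_hom R S"
  by (rule ideal.rcos_ring_hom[OF ideal_I])

lemma hom_S: "ring_hom_ring R S (cos)"
  by (rule ideal.rcos_ring_hom_ring[OF ideal_I])

definition phi :: "(nat \<times> nat \<Rightarrow> 'a) set \<Rightarrow> (nat \<times> nat \<Rightarrow> 'a)" where
  "phi XX = ax (SOME p. p \<in> XX)"

lemma coset_mem: "q \<in> cos p \<Longrightarrow> ax q = ax p"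
proof -
  assume "q \<in> cos p"
  then obtain h where h: "h \<in> Iax" "q = h \<oplus>\<^bsub>R\<^esub> p" unfolding a_r_coset_def' by auto
  then show "ax q = ax p" unfolding ax_def Iax_def R_simps by auto
qed

lemma phi_coset: "p \<in> carrier R \<Longrightarrow> phi (cos p) = ax p"
proof -
  assume p: "p \<in> carrier R"
  interpret I: ideal Iax R by (rule ideal_I)
  have "p \<in> cos p" by (rule I.a_rcos_self[OF p])
  then have "(SOME q. q \<in> cos p) \<in> cos p" by (rule someI[where P="\<lambda>q. q \<in> cos p"])
  then show ?thesis unfolding phi_def by (rule coset_mem)
qed

lemma coset_eq:
  assumes p: "p \<in> carrier R" and q: "q \<in> carrier R" and e: "ax p = ax q"
  shows "cos p = cos q"
proof -
  have m: "p \<ominus>\<^bsub>R\<^esub> q = (\<lambda>x. p x - q x)"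
    unfolding a_minus_def a_inv_R[OF q] R_simps by simp
  have sub: "{x. p x - q x \<noteq> 0} \<subseteq> {x. p x \<noteq> 0} \<union> {x. q x \<noteq> 0}" by auto
  have fin: "finite ({x. p x \<noteq> 0} \<union> {x. q x \<noteq> 0})" using p q unfolding R_simps by simp
  have c: "(\<lambda>x. p x - q x) \<in> carrier R"
    unfolding R_simps mem_Collect_eq by (rule finite_subset[OF sub fin])
  have z: "\<forall>x. onax x \<longrightarrow> p x - q x = 0" using e unfolding ax_def by (metis (mono_tags) eq_iff_diff_eq_0)
  have "p \<ominus>\<^bsub>R\<^esub> q \<in> Iax" unfolding Iax_def m using c z by blast
  then show ?thesis using ring.quotient_eq_iff_same_a_r_cos[OF ring_R ideal_I p q] by blast
qed

lemma phi_inj: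
  assumes "XX \<in> carrier S" "YY \<in> carrier S" "phi XX = phi YY"
  shows "XX = YY"
proof -
  obtain p q where pq: "p \<in> carrier R" "q \<in> carrier R" "XX = cos p" "YY = cos q"
    using S_rep assms(1,2) by blast
  then have "ax p = ax q" using assms(3) phi_coset by metis
  then show ?thesis using coset_eq[OF pq(1,2)] pq(3,4) by blast
qed

lemma phi_off: "\<not> onax x \<Longrightarrow> phi XX x = 0"
  unfolding phi_def ax_def by simp

lemma ax_on: "onax x \<Longrightarrow> ax p x = p x"
  unfolding ax_def by simp

lemma onax_simps[simp]: "onax (n, 0)" "onax (0, n)"
  unfolding onax_def by simp_all

lemma phi_add:
  assumes "XX \<in> carrier S" "YY \<in> carrier S"
  shows "phi (XX \<oplus>\<^bsub>S\<^esub> YY) x = phi XX x + phi YY x"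
proof -
  obtain p q where pq: "p \<in> carrier R" "q \<in> carrier R" "XX = cos p" "YY = cos q"
    using S_rep assms(1,2) by blast
  have c: "p \<oplus>\<^bsub>R\<^esub> q \<in> carrier R" using pq ring.ring_simprules(1)[OF ring_R] by blast
  have e: "XX \<oplus>\<^bsub>S\<^esub> YY = cos (p \<oplus>\<^bsub>R\<^esub> q)"
    unfolding pq(3,4) by (rule ring_hom_add[OF hom_S' pq(1,2), symmetric])
  have "phi (XX \<oplus>\<^bsub>S\<^esub> YY) = ax (p \<oplus>\<^bsub>R\<^esub> q)" unfolding e by (rule phi_coset[OF c])
  then show ?thesis unfolding pq(3,4) phi_coset[OF pq(1)] phi_coset[OF pq(2)] ax_def R_simps(5)
    by simp
qed

lemma phi_mult1:
  assumes "XX \<in> carrier S" "YY \<in> carrier S"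
  shows "phi (XX \<otimes>\<^bsub>S\<^esub> YY) (n, 0) = (\<Sum>i\<in>{0..n}. phi XX (i, 0) * (s1 ^^ i) (phi YY (n - i, 0)))"
proof -
  obtain p q where pq: "p \<in> carrier R" "q \<in> carrier R" "XX = cos p" "YY = cos q"
    using S_rep assms(1,2) by blast
  have c: "p \<otimes>\<^bsub>R\<^esub> q \<in> carrier R" using pq mult_closed by blast
  have e: "XX \<otimes>\<^bsub>S\<^esub> YY = cos (p \<otimes>\<^bsub>R\<^esub> q)"
    unfolding pq(3,4) by (rule ring_hom_mult[OF hom_S' pq(1,2), symmetric])
  have "phi (XX \<otimes>\<^bsub>S\<^esub> YY) = ax (p \<otimes>\<^bsub>R\<^esub> q)" unfolding e by (rule phi_coset[OF c])
  then show ?thesis unfolding pq(3,4) phi_coset[OF pq(1)] phi_coset[OF pq(2)]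
    by (simp add: ax_on mult_axis1)
qed

lemma phi_mult2:
  assumes "XX \<in> carrier S" "YY \<in> carrier S"
  shows "phi (XX \<otimes>\<^bsub>S\<^esub> YY) (0, n) = (\<Sum>j\<in>{0..n}. phi XX (0, j) * (s2 ^^ j) (phi YY (0, n - j)))"
proof -
  obtain p q where pq: "p \<in> carrier R" "q \<in> carrier R" "XX = cos p" "YY = cos q"
    using S_rep assms(1,2) by blast
  have c: "p \<otimes>\<^bsub>R\<^esub> q \<in> carrier R" using pq mult_closed by blast
  have e: "XX \<otimes>\<^bsub>S\<^esub> YY = cos (p \<otimes>\<^bsub>R\<^esub> q)"
    unfolding pq(3,4) by (rule ring_hom_mult[OF hom_S' pq(1,2), symmetric])
  have "phi (XX \<otimes>\<^bsub>S\<^esub> YY) = ax (p \<otimes>\<^bsub>R\<^esub> q)" unfolding e by (rule phi_coset[OF c])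
  then show ?thesis unfolding pq(3,4) phi_coset[OF pq(1)] phi_coset[OF pq(2)]
    by (simp add: ax_on mult_axis2)
qed

lemma phi_zero: "phi \<zero>\<^bsub>S\<^esub> x = 0"
proof -
  interpret H: ring_hom_ring R S "cos" by (rule hom_S)
  have "\<zero>\<^bsub>S\<^esub> = cos \<zero>\<^bsub>R\<^esub>" by simp
  then show ?thesis using phi_coset[of "\<zero>\<^bsub>R\<^esub>"] unfolding ax_def R_simps by simp
qed

lemma phi_one: "phi \<one>\<^bsub>S\<^esub> = skew_const 1"
proof -
  interpret H: ring_hom_ring R S "cos" by (rule hom_S)
  have "\<one>\<^bsub>S\<^esub> = cos \<one>\<^bsub>R\<^esub>" by simp
  then show ?thesis using phi_coset[of "\<one>\<^bsub>R\<^esub>"] unfolding ax_def R_simps skew_const_def onax_def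
    by auto
qed

lemma phi_neg:
  assumes "XX \<in> carrier S"
  shows "phi (\<ominus>\<^bsub>S\<^esub> XX) x = - phi XX x"
proof -
  interpret ring S by (rule ring_S)
  have "phi (\<ominus>\<^bsub>S\<^esub> XX \<oplus>\<^bsub>S\<^esub> XX) x = 0" using phi_zero l_neg[OF assms] by simp
  then show ?thesis using phi_add[of "\<ominus>\<^bsub>S\<^esub> XX" XX x] assms by (simp add: add_eq_0_iff2)
qed

lemma phi_fin: "XX \<in> carrier S \<Longrightarrow> finite {x. phi XX x \<noteq> 0}"
proof -
  assume "XX \<in> carrier S"
  then obtain p where p: "p \<in> carrier R" "XX = cos p" using S_rep by blast
  then have "{x. phi XX x \<noteq> 0} \<subseteq> {x. p x \<noteq> 0}" using phi_coset unfolding ax_def by auto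
  then show ?thesis using p(1) unfolding R_simps by (auto intro: finite_subset)
qed

lemma phi_finsum:
  assumes "finite A" "f \<in> A \<rightarrow> carrier S"
  shows "phi (finsum S f A) x = (\<Sum>a\<in>A. phi (f a) x)"
  using assms
proof (induction A rule: finite_induct)
  case empty
  interpret ring S by (rule ring_S)
  show ?case using phi_zero by simp
next
  case (insert a F)
  interpret ring S by (rule ring_S)
  have "finsum S f (insert a F) = f a \<oplus>\<^bsub>S\<^esub> finsum S f F"
    using insert by (simp add: finsum_insert)
  moreover have "finsum S f F \<in> carrier S" using insert by simp
  ultimately show ?case using insert phi_add by simp
qed

definition iota :: "'a \<Rightarrow> (nat \<times> nat \<Rightarrow> 'a) set" where
  "iota d = cos (skew_const d)"

lemma skew_const_carrier: "skew_const d \<in> carrier R"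
  unfolding R_simps skew_const_def
  by (rule CollectI, rule finite_subset[of _ "{(0,0)}"]) auto

lemma iota_carrier: "iota d \<in> carrier S"
  unfolding iota_def by (rule coset_in_S[OF skew_const_carrier])

lemma phi_iota: "phi (iota d) = skew_const d"
proof -
  have "phi (iota d) = ax (skew_const d)" unfolding iota_def by (rule phi_coset[OF skew_const_carrier])
  then show ?thesis by (auto simp: ax_def skew_const_def onax_def)
qed

end

lemma finprod_insert_comm:
  fixes G (structure)
  assumes "monoid G" "finite F" "x \<notin> F" "f \<in> insert x F \<rightarrow> carrier G"
    and comm: "\<And>u v. u \<in> insert x F \<Longrightarrow> v \<in> insert x F \<Longrightarrow> f u \<otimes> f v = f v \<otimes> f u"
  shows "finprod G f (insert x F) = f x \<otimes> finprod G f F"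
proof -
  interpret monoid G by fact
  have L: "LCD (insert x F) (carrier G) ((\<otimes>) \<circ> f)"
  proof
    fix u v z assume u: "u \<in> insert x F" and v: "v \<in> insert x F" and z: "z \<in> carrier G"
    have fu: "f u \<in> carrier G" and fv: "f v \<in> carrier G" using u v assms(4) by auto
    show "((\<otimes>) \<circ> f) u (((\<otimes>) \<circ> f) v z) = ((\<otimes>) \<circ> f) v (((\<otimes>) \<circ> f) u z)"
      using comm[OF u v] fu fv z by (simp add: m_assoc[symmetric])
  next
    fix u y assume "u \<in> insert x F" "y \<in> carrier G"
    then show "((\<otimes>) \<circ> f) u y \<in> carrier G" using assms(4) by auto
  qed
  have "finprod G f (insert x F) = foldD (carrier G) ((\<otimes>) \<circ> f) \<one> (insert x F)"
    using assms(2) by (simp add: finprod_def)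
  also have "\<dots> = ((\<otimes>) \<circ> f) x (foldD (carrier G) ((\<otimes>) \<circ> f) \<one> F)"
    by (rule LCD.foldD_insert[OF L]) (use assms in auto)
  also have "\<dots> = f x \<otimes> finprod G f F"
    using assms(2) by (simp add: finprod_def)
  finally show ?thesis .
qed

lemma finprod_ones:
  fixes G (structure)
  assumes "monoid G" "finite F" "\<And>u. u \<in> F \<Longrightarrow> f u = \<one>"
  shows "finprod G f F = \<one>"
  using assms(2,3)
proof (induction F rule: finite_induct)
  case empty
  interpret monoid G by fact
  show ?case by (simp add: finprod_def foldD_empty)
next
  case (insert x F)
  interpret monoid G by fact
  have "finprod G f (insert x F) = f x \<otimes> finprod G f F"
    by (rule finprod_insert_comm[OF assms(1) insert(1,2)]) (use insert(4) in auto)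
  then show ?case using insert by simp
qed

lemma funpow_inv_cancel:
  fixes f :: "'a \<Rightarrow> 'a"
  assumes "surj f"
  shows "(f ^^ k) ((inv_into UNIV f ^^ k) r) = r"
proof (induction k arbitrary: r)
  case 0
  then show ?case by simp
next
  case (Suc k)
  have "(f ^^ Suc k) ((inv_into UNIV f ^^ Suc k) r) = (f ^^ k) (f (inv_into UNIV f ((inv_into UNIV f ^^ k) r)))"
  proof -
    have a: "(inv_into UNIV f ^^ Suc k) r = inv_into UNIV f ((inv_into UNIV f ^^ k) r)" by simp
    have b: "(f ^^ Suc k) y = (f ^^ k) (f y)" for y by (simp add: funpow_swap1)
    show ?thesis unfolding a b ..
  qed
  also have "\<dots> = (f ^^ k) ((inv_into UNIV f ^^ k) r)" using surj_f_inv_f[OF assms] by simp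
  finally show ?case using Suc by simp
qed

context skewctx
begin

definition pos :: "bool \<Rightarrow> nat \<Rightarrow> nat \<times> nat" where
  "pos e n = (if e then (n, 0) else (0, n))"

definition pw :: "bool \<Rightarrow> 'a \<Rightarrow> 'a" where
  "pw e = (if e then s1 else s2)"

lemma pos_0[simp]: "pos e 0 = (0, 0)" unfolding pos_def by simp

lemma pos_inj[simp]: "pos e n = pos e k \<longleftrightarrow> n = k" unfolding pos_def by auto

lemma pos_00[simp]: "pos e n = (0, 0) \<longleftrightarrow> n = 0" unfolding pos_def by auto

lemma pw_zero[simp]: "(pw e ^^ j) 0 = 0" unfolding pw_def by simp

lemma phi_mult_e:
  assumes "XX \<in> carrier S" "YY \<in> carrier S"
  shows "phi (XX \<otimes>\<^bsub>S\<^esub> YY) (pos e n) = (\<Sum>j\<in>{0..n}. phi XX (pos e j) * (pw e ^^ j) (phi YY (pos e (n - j))))"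
  using phi_mult1[OF assms] phi_mult2[OF assms] unfolding pos_def pw_def by simp

lemma onax_cases: "onax x \<Longrightarrow> \<exists>e n. x = pos e n"
  unfolding onax_def pos_def by (cases x) auto

lemma sc_pos: "skew_const d (pos e n) = (if n = 0 then d else 0)"
  unfolding skew_const_def by simp

lemma sc_mult: "skew_const d \<otimes>\<^bsub>R\<^esub> skew_const c = skew_const (d * c)"
proof (rule ext, clarify)
  fix n1 n2
  have "(skew_const d \<otimes>\<^bsub>R\<^esub> skew_const c) (n1, n2) = (\<Sum>i\<in>{0..n1}. \<Sum>j\<in>{0..n2}.
        (if i = 0 then (if j = 0 then d * skew_const c (n1, n2) else 0) else 0))"
    unfolding mult_at by (intro sum.cong refl) (auto simp: skew_const_def)
  also have "\<dots> = (\<Sum>i\<in>{0..n1}. (if i = 0 then d * skew_const c (n1, n2) else 0))"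
    by (intro sum.cong refl) simp
  also have "\<dots> = skew_const (d * c) (n1, n2)" by (simp add: skew_const_def)
  finally show "(skew_const d \<otimes>\<^bsub>R\<^esub> skew_const c) (n1, n2) = skew_const (d * c) (n1, n2)" .
qed

lemma iota_mult: "iota d \<otimes>\<^bsub>S\<^esub> iota c = iota (d * c)"
  unfolding iota_def sc_mult[symmetric]
  by (rule ring_hom_mult[OF hom_S' skew_const_carrier skew_const_carrier, symmetric])

lemma iota_one: "iota 1 = \<one>\<^bsub>S\<^esub>"
proof -
  have "skew_const 1 = \<one>\<^bsub>R\<^esub>" unfolding skew_const_def R_simps by simp
  then show ?thesis unfolding iota_def using ring_hom_one[OF hom_S'] by simp
qed

lemma iota_neg: "iota (- d) = \<ominus>\<^bsub>S\<^esub> iota d"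
proof -
  interpret ring S by (rule ring_S)
  have c: "\<ominus>\<^bsub>S\<^esub> iota d \<in> carrier S" using iota_carrier by simp
  show ?thesis
  proof (rule phi_inj[OF iota_carrier c], rule ext)
    fix x show "phi (iota (- d)) x = phi (\<ominus>\<^bsub>S\<^esub> iota d) x"
      unfolding phi_neg[OF iota_carrier] phi_iota skew_const_def by simp
  qed
qed

end

context skewctx
begin

lemma onax_pos[simp]: "onax (pos e n)" unfolding pos_def onax_def by simp

definition Te :: "bool \<Rightarrow> (nat \<times> nat \<Rightarrow> 'a) set \<Rightarrow> bool" where
  "Te e Z \<longleftrightarrow> (\<forall>n>0. phi Z (pos e n) = 0)"

lemma auto_coef:
  assumes a: "Z \<in> carrier S" and au: "Z \<otimes>\<^bsub>S\<^esub> iota b = iota (\<tau> b) \<otimes>\<^bsub>S\<^esub> Z"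
  shows "phi Z (pos e k) * (pw e ^^ k) b = \<tau> b * phi Z (pos e k)"
proof -
  have "phi (Z \<otimes>\<^bsub>S\<^esub> iota b) (pos e k) = (\<Sum>j\<in>{0..k}. phi Z (pos e j) * (pw e ^^ j) (skew_const b (pos e (k - j))))"
    using phi_mult_e[OF a iota_carrier] phi_iota by simp
  also have "\<dots> = (\<Sum>j\<in>{0..k}. if j = k then phi Z (pos e k) * (pw e ^^ k) b else 0)"
    by (rule sum.cong[OF refl]) (auto simp: sc_pos)
  also have "\<dots> = phi Z (pos e k) * (pw e ^^ k) b" by simp
  finally have 1: "phi (Z \<otimes>\<^bsub>S\<^esub> iota b) (pos e k) = phi Z (pos e k) * (pw e ^^ k) b" .
  have "phi (iota (\<tau> b) \<otimes>\<^bsub>S\<^esub> Z) (pos e k) = (\<Sum>j\<in>{0..k}. skew_const (\<tau> b) (pos e j) * (pw e ^^ j) (phi Z (pos e (k - j))))"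
    using phi_mult_e[OF iota_carrier a] phi_iota by simp
  also have "\<dots> = (\<Sum>j\<in>{0..k}. if j = 0 then \<tau> b * phi Z (pos e k) else 0)"
    by (rule sum.cong[OF refl]) (auto simp: sc_pos)
  also have "\<dots> = \<tau> b * phi Z (pos e k)" by simp
  finally show ?thesis using 1 au by simp
qed

lemma claimA:
  assumes hyp: "\<forall>k1 k2::nat. 0 < k1 \<longrightarrow> 0 < k2 \<longrightarrow>
           \<not> inner_automorphism ((s1 ^^ k1) \<circ> (inv_into UNIV s2 ^^ k2))"
    and surj2: "surj s2"
    and a: "Z \<in> carrier S" and au: "\<forall>b. Z \<otimes>\<^bsub>S\<^esub> iota b = iota (\<tau> b) \<otimes>\<^bsub>S\<^esub> Z"
  shows "Te True Z \<or> Te False Z"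
proof (rule ccontr)
  assume "\<not> (Te True Z \<or> Te False Z)"
  then obtain k1 k2 where k1: "k1 > 0" "phi Z (pos True k1) \<noteq> 0"
    and k2: "k2 > 0" "phi Z (pos False k2) \<noteq> 0"
    unfolding Te_def by blast
  define A1 where "A1 = phi Z (pos True k1)"
  define A2 where "A2 = phi Z (pos False k2)"
  have e1: "A1 * (s1 ^^ k1) b = \<tau> b * A1" for b
    using auto_coef[OF a, of b \<tau> True k1] au unfolding A1_def pw_def by simp
  have e2: "A2 * (s2 ^^ k2) b = \<tau> b * A2" for b
    using auto_coef[OF a, of b \<tau> False k2] au unfolding A2_def pw_def by simp
  have nz: "A1 \<noteq> 0" "A2 \<noteq> 0" using k1 k2 A1_def A2_def by auto
  define c where "c = inverse A1 * A2"
  have "inner_automorphism ((s1 ^^ k1) \<circ> (inv_into UNIV s2 ^^ k2))"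
    unfolding inner_automorphism_def
  proof (intro exI conjI allI)
    show "c \<noteq> 0" using nz unfolding c_def by simp
  next
    fix r
    define b where "b = (inv_into UNIV s2 ^^ k2) r"
    have sb: "(s2 ^^ k2) b = r" unfolding b_def by (rule funpow_inv_cancel[OF surj2])
    have "\<tau> b = \<tau> b * A2 * inverse A2" using nz by (simp add: mult.assoc)
    also have "\<dots> = A2 * r * inverse A2" using e2[of b] sb by simp
    finally have t: "\<tau> b = A2 * r * inverse A2" .
    have "(s1 ^^ k1) b = inverse A1 * (A1 * (s1 ^^ k1) b)" using nz by (simp add: mult.assoc[symmetric])
    also have "\<dots> = inverse A1 * (\<tau> b * A1)" using e1[of b] by simp
    finally have u: "(s1 ^^ k1) b = inverse A1 * (A2 * r * inverse A2) * A1" using t by (simp add: mult.assoc)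
    have ic: "inverse c = inverse A2 * A1"
      unfolding c_def using nz by (simp add: nonzero_inverse_mult_distrib)
    show "((s1 ^^ k1) \<circ> (inv_into UNIV s2 ^^ k2)) r = c * r * inverse c"
      unfolding comp_apply b_def[symmetric] u ic c_def using ic[unfolded c_def] by (simp add: mult.assoc)
  qed
  then show False using hyp k1 k2 by blast
qed

lemma gen_Te:
  assumes H: "\<forall>h\<in>H. h \<in> carrier S \<and> Te e h"
  shows "Z \<in> generate_ring S H \<Longrightarrow> Z \<in> carrier S \<and> Te e Z"
proof (induction rule: generate_ring.induct)
  case one
  interpret ring S by (rule ring_S)
  show ?case unfolding Te_def phi_one by (simp add: sc_pos)
next
  case (incl h)
  then show ?case using H by blast
next
  case (a_inv h)
  interpret ring S by (rule ring_S)
  show ?case using a_inv phi_neg unfolding Te_def by simp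
next
  case (eng_add h1 h2)
  interpret ring S by (rule ring_S)
  show ?case using eng_add phi_add unfolding Te_def by simp
next
  case (eng_mult h1 h2)
  interpret ring S by (rule ring_S)
  have "phi (h1 \<otimes>\<^bsub>S\<^esub> h2) (pos e n) = 0" if "n > 0" for n
  proof -
    have "phi (h1 \<otimes>\<^bsub>S\<^esub> h2) (pos e n) = (\<Sum>j\<in>{0..n}. phi h1 (pos e j) * (pw e ^^ j) (phi h2 (pos e (n - j))))"
      using phi_mult_e eng_mult by blast
    also have "\<dots> = (\<Sum>j\<in>{0..n}. 0)"
    proof (rule sum.cong[OF refl])
      fix j assume "j \<in> {0..n}"
      show "phi h1 (pos e j) * (pw e ^^ j) (phi h2 (pos e (n - j))) = 0"
      proof (cases "j = 0")
        case True
        then show ?thesis using eng_mult that unfolding Te_def by simp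
      next
        case False
        then show ?thesis using eng_mult unfolding Te_def by simp
      qed
    qed
    finally show ?thesis by simp
  qed
  then show ?case using eng_mult unfolding Te_def by simp
qed

lemma claimB:
  assumes H: "\<forall>h\<in>H. h \<in> carrier S \<and> Te e h"
  shows "\<not> finitely_generated_left_module_over S (generate_ring S H)"
proof
  interpret ring S by (rule ring_S)
  assume "finitely_generated_left_module_over S (generate_ring S H)"
  then obtain G where G: "finite G" "G \<subseteq> carrier S"
    and sp: "\<forall>s\<in>carrier S. \<exists>r. (\<forall>g\<in>G. r g \<in> generate_ring S H) \<and> s = finsum S (\<lambda>g. r g \<otimes>\<^bsub>S\<^esub> g) G"
    unfolding finitely_generated_left_module_over_def by blast
  have injp: "inj (pos e)" unfolding inj_def by simp
  have "finite (\<Union>g\<in>G. pos e -` {x. phi g x \<noteq> 0})"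
    using G phi_fin finite_vimageI[OF _ injp] by blast
  then obtain N where N: "\<forall>n\<in>(\<Union>g\<in>G. pos e -` {x. phi g x \<noteq> 0}). n \<le> N"
    using finite_nat_set_iff_bounded_le by blast
  have Nz: "phi g (pos e n) = 0" if "g \<in> G" "n > N" for g n
    using N that by force
  define t where "t = (\<lambda>x. if x = pos e (Suc N) then (1::'a) else 0)"
  have tc: "t \<in> carrier R" unfolding R_simps t_def
    by (rule CollectI, rule finite_subset[of _ "{pos e (Suc N)}"]) auto
  have scS: "cos t \<in> carrier S" by (rule coset_in_S[OF tc])
  obtain r where r: "\<forall>g\<in>G. r g \<in> generate_ring S H"
    and eq: "cos t = finsum S (\<lambda>g. r g \<otimes>\<^bsub>S\<^esub> g) G" using sp scS by blast
  have rc: "r g \<in> carrier S \<and> Te e (r g)" if "g \<in> G" for g using gen_Te[OF H] r that by blast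
  have "phi (cos t) (pos e (Suc N)) = 1" using phi_coset[OF tc] unfolding ax_def t_def by simp
  moreover have "phi (finsum S (\<lambda>g. r g \<otimes>\<^bsub>S\<^esub> g) G) (pos e (Suc N)) = 0"
  proof -
    have f: "(\<lambda>g. r g \<otimes>\<^bsub>S\<^esub> g) \<in> G \<rightarrow> carrier S" using rc G(2) by auto
    have "phi (finsum S (\<lambda>g. r g \<otimes>\<^bsub>S\<^esub> g) G) (pos e (Suc N)) = (\<Sum>g\<in>G. phi (r g \<otimes>\<^bsub>S\<^esub> g) (pos e (Suc N)))"
      by (rule phi_finsum[OF G(1) f])
    also have "\<dots> = (\<Sum>g\<in>G. 0)"
    proof (rule sum.cong[OF refl])
      fix g assume g: "g \<in> G"
      have gc: "g \<in> carrier S" using g G(2) by auto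
      have "phi (r g \<otimes>\<^bsub>S\<^esub> g) (pos e (Suc N)) = (\<Sum>j\<in>{0..Suc N}. phi (r g) (pos e j) * (pw e ^^ j) (phi g (pos e (Suc N - j))))"
        using phi_mult_e rc[OF g] gc by blast
      also have "\<dots> = (\<Sum>j\<in>{0..Suc N}. 0)"
      proof (rule sum.cong[OF refl])
        fix j assume "j \<in> {0..Suc N}"
        show "phi (r g) (pos e j) * (pw e ^^ j) (phi g (pos e (Suc N - j))) = 0"
        proof (cases "j = 0")
          case True
          then show ?thesis using Nz[OF g, of "Suc N"] by simp
        next
          case False
          then show ?thesis using rc[OF g] unfolding Te_def by simp
        qed
      qed
      finally show "phi (r g \<otimes>\<^bsub>S\<^esub> g) (pos e (Suc N)) = 0" by simp
    qed
    finally show ?thesis by simp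
  qed
  ultimately show False using eq by simp
qed

end

context skewctx
begin

lemma claimC:
  assumes ai: "ai \<in> carrier S" and aj: "aj \<in> carrier S"
    and aui: "\<forall>b. ai \<otimes>\<^bsub>S\<^esub> iota b = iota (\<tau> b) \<otimes>\<^bsub>S\<^esub> ai"
    and ti: "Te False ai" and tj: "Te True aj"
  shows "phi (ai \<otimes>\<^bsub>S\<^esub> aj) w = phi (iota (phi ai (0,0)) \<otimes>\<^bsub>S\<^esub> aj) w
     - phi (iota (phi ai (0,0)) \<otimes>\<^bsub>S\<^esub> iota (phi aj (0,0))) w
     + phi (iota (\<tau> (phi aj (0,0))) \<otimes>\<^bsub>S\<^esub> ai) w"
proof -
  interpret ring S by (rule ring_S)
  define ci where "ci = phi ai (0,0)"
  define cj where "cj = phi aj (0,0)"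
  define x where "x = ai \<oplus>\<^bsub>S\<^esub> \<ominus>\<^bsub>S\<^esub> iota ci"
  define y where "y = aj \<oplus>\<^bsub>S\<^esub> \<ominus>\<^bsub>S\<^esub> iota cj"
  have xc: "x \<in> carrier S" unfolding x_def using ai iota_carrier by simp
  have yc: "y \<in> carrier S" unfolding y_def using aj iota_carrier by simp
  have phx: "phi x u = phi ai u - skew_const ci u" for u
    unfolding x_def using phi_add[OF ai] phi_neg[OF iota_carrier] phi_iota iota_carrier by simp
  have phy: "phi y u = phi aj u - skew_const cj u" for u
    unfolding y_def using phi_add[OF aj] phi_neg[OF iota_carrier] phi_iota iota_carrier by simp
  have x0: "phi x (pos False k) = 0" for k
    using ti unfolding phx Te_def ci_def by (cases "k = 0") (auto simp: sc_pos skew_const_def)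
  have y0: "phi y (pos True k) = 0" for k
    using tj unfolding phy Te_def cj_def by (cases "k = 0") (auto simp: sc_pos skew_const_def)
  have xy: "x \<otimes>\<^bsub>S\<^esub> y = \<zero>\<^bsub>S\<^esub>"
  proof (rule phi_inj)
    show "x \<otimes>\<^bsub>S\<^esub> y \<in> carrier S" using xc yc by simp
    show "\<zero>\<^bsub>S\<^esub> \<in> carrier S" by simp
    show "phi (x \<otimes>\<^bsub>S\<^esub> y) = phi \<zero>\<^bsub>S\<^esub>"
    proof (rule ext)
      fix u
      show "phi (x \<otimes>\<^bsub>S\<^esub> y) u = phi \<zero>\<^bsub>S\<^esub> u"
      proof (cases "onax u")
        case False
        then show ?thesis using phi_off by simp
      next
        case True
        then obtain e n where u: "u = pos e n" using onax_cases by blast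
        have "phi (x \<otimes>\<^bsub>S\<^esub> y) (pos e n) = (\<Sum>j\<in>{0..n}. phi x (pos e j) * (pw e ^^ j) (phi y (pos e (n - j))))"
          by (rule phi_mult_e[OF xc yc])
        also have "\<dots> = 0"
          by (cases e) (simp_all add: x0 y0)
        finally show ?thesis using u phi_zero by simp
      qed
    qed
  qed
  have ajd: "aj = y \<oplus>\<^bsub>S\<^esub> iota cj"
  proof (rule phi_inj[OF aj])
    show "y \<oplus>\<^bsub>S\<^esub> iota cj \<in> carrier S" using yc iota_carrier by simp
    show "phi aj = phi (y \<oplus>\<^bsub>S\<^esub> iota cj)"
      by (rule ext) (simp add: phi_add[OF yc iota_carrier] phy phi_iota)
  qed
  have aid: "ai = x \<oplus>\<^bsub>S\<^esub> iota ci"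
  proof (rule phi_inj[OF ai])
    show "x \<oplus>\<^bsub>S\<^esub> iota ci \<in> carrier S" using xc iota_carrier by simp
    show "phi ai = phi (x \<oplus>\<^bsub>S\<^esub> iota ci)"
      by (rule ext) (simp add: phi_add[OF xc iota_carrier] phx phi_iota)
  qed
  have "ai \<otimes>\<^bsub>S\<^esub> aj = ai \<otimes>\<^bsub>S\<^esub> y \<oplus>\<^bsub>S\<^esub> ai \<otimes>\<^bsub>S\<^esub> iota cj"
    using r_distr[OF yc iota_carrier ai] ajd by simp
  also have "ai \<otimes>\<^bsub>S\<^esub> y = iota ci \<otimes>\<^bsub>S\<^esub> y"
  proof -
    have "ai \<otimes>\<^bsub>S\<^esub> y = x \<otimes>\<^bsub>S\<^esub> y \<oplus>\<^bsub>S\<^esub> iota ci \<otimes>\<^bsub>S\<^esub> y"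
      using l_distr[OF xc iota_carrier yc] aid by simp
    then show ?thesis using xy iota_carrier yc by simp
  qed
  also have "iota ci \<otimes>\<^bsub>S\<^esub> y = iota ci \<otimes>\<^bsub>S\<^esub> aj \<oplus>\<^bsub>S\<^esub> \<ominus>\<^bsub>S\<^esub> (iota ci \<otimes>\<^bsub>S\<^esub> iota cj)"
    unfolding y_def using r_distr[OF aj _ iota_carrier] r_minus[OF iota_carrier iota_carrier] iota_carrier
    by simp
  also have "ai \<otimes>\<^bsub>S\<^esub> iota cj = iota (\<tau> cj) \<otimes>\<^bsub>S\<^esub> ai" using aui by simp
  finally have eq: "ai \<otimes>\<^bsub>S\<^esub> aj = iota ci \<otimes>\<^bsub>S\<^esub> aj \<oplus>\<^bsub>S\<^esub> \<ominus>\<^bsub>S\<^esub> (iota ci \<otimes>\<^bsub>S\<^esub> iota cj)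
      \<oplus>\<^bsub>S\<^esub> iota (\<tau> cj) \<otimes>\<^bsub>S\<^esub> ai" .
  show ?thesis
    unfolding ci_def[symmetric] cj_def[symmetric] eq
    using iota_carrier ai aj
    by (simp add: phi_add phi_neg)
qed

end

context skewctx
begin

lemma mono_two:
  assumes im: "i < m" and jm: "j < m" and ij: "i \<noteq> j"
    and ac: "\<forall>k<m. a k \<in> carrier S"
    and acomm: "a i \<otimes>\<^bsub>S\<^esub> a j = a j \<otimes>\<^bsub>S\<^esub> a i"
    and al0: "\<forall>k. k \<noteq> i \<longrightarrow> k \<noteq> j \<longrightarrow> \<alpha> k = 0" and ali: "\<alpha> i \<le> 1" and alj: "\<alpha> j \<le> 1"
  shows "monomial_in S m a \<alpha> = (a i [^]\<^bsub>S\<^esub> \<alpha> i) \<otimes>\<^bsub>S\<^esub> (a j [^]\<^bsub>S\<^esub> \<alpha> j)"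
proof -
  interpret ring S by (rule ring_S)
  define f where "f = (\<lambda>k. a k [^]\<^bsub>S\<^esub> \<alpha> k)"
  have aic: "a i \<in> carrier S" and ajc: "a j \<in> carrier S" using ac im jm by auto
  have pw01: "b [^]\<^bsub>S\<^esub> (n::nat) \<in> {\<one>\<^bsub>S\<^esub>, b}" if "n \<le> 1" "b \<in> carrier S" for b n
  proof (cases n)
    case 0 then show ?thesis by simp
  next
    case (Suc n') then have "n = 1" using that by simp
    then show ?thesis using that by simp
  qed
  have fv: "f k \<in> {\<one>\<^bsub>S\<^esub>, a i, a j}" if "k < m" for k
  proof -
    consider "k = i" | "k = j" | "k \<noteq> i" "k \<noteq> j" by blast
    then show ?thesis
    proof cases
      case 1 then show ?thesis using pw01[OF ali aic] unfolding f_def by auto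
    next
      case 2 then show ?thesis using pw01[OF alj ajc] unfolding f_def by auto
    next
      case 3 then show ?thesis using al0 unfolding f_def by simp
    qed
  qed
  have fc: "f k \<in> carrier S" if "k < m" for k using fv[OF that] aic ajc by auto
  have comm: "f u \<otimes>\<^bsub>S\<^esub> f v = f v \<otimes>\<^bsub>S\<^esub> f u" if "u < m" "v < m" for u v
    using fv[OF that(1)] fv[OF that(2)] aic ajc acomm by auto
  define Rest where "Rest = {..<m} - {i, j}"
  have set: "{..<m} = insert i (insert j Rest)" unfolding Rest_def using im jm by auto
  have fin: "finite Rest" unfolding Rest_def by simp
  have sub: "insert i (insert j Rest) \<subseteq> {..<m}" using set by simp
  have "finprod S f {..<m} = f i \<otimes>\<^bsub>S\<^esub> finprod S f (insert j Rest)"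
    unfolding set
    by (rule finprod_insert_comm[OF is_monoid])
      (use fin ij sub fc comm in \<open>auto simp: Rest_def\<close>)
  also have "finprod S f (insert j Rest) = f j \<otimes>\<^bsub>S\<^esub> finprod S f Rest"
    by (rule finprod_insert_comm[OF is_monoid])
      (use fin ij sub fc comm in \<open>auto simp: Rest_def\<close>)
  also have "finprod S f Rest = \<one>\<^bsub>S\<^esub>"
    by (rule finprod_ones[OF is_monoid fin]) (use al0 in \<open>auto simp: Rest_def f_def\<close>)
  finally have "finprod S f {..<m} = f i \<otimes>\<^bsub>S\<^esub> f j" using fc im jm by simp
  then show ?thesis unfolding monomial_in_def f_def by simp
qed

lemma main_loc:
  assumes hyp: "\<forall>k1 k2::nat. 0 < k1 \<longrightarrow> 0 < k2 \<longrightarrow>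
           \<not> inner_automorphism ((s1 ^^ k1) \<circ> (inv_into UNIV s2 ^^ k2))"
    and surj2: "surj s2"
  shows "\<not> automorphically_normalizable S iota"
proof
  interpret ring S by (rule ring_S)
  assume "automorphically_normalizable S iota"
  then obtain m a \<tau> where ac: "\<forall>i<m. a i \<in> carrier S"
    and acomm: "\<forall>i<m. \<forall>j<m. a i \<otimes>\<^bsub>S\<^esub> a j = a j \<otimes>\<^bsub>S\<^esub> a i"
    and aut: "\<forall>i<m. automorphic_over S iota (\<tau> i) (a i)"
    and ind: "left_alg_indep S iota m a"
    and fg: "finitely_generated_left_module_over S (generate_ring S (iota ` UNIV \<union> a ` {..<m}))"
    unfolding automorphically_normalizable_def by blast
  have au: "\<forall>b. a i \<otimes>\<^bsub>S\<^esub> iota b = iota (\<tau> i b) \<otimes>\<^bsub>S\<^esub> a i" if "i < m" for i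
    using aut that unfolding automorphic_over_def by blast
  have Aor: "Te True (a i) \<or> Te False (a i)" if "i < m" for i
    using claimA[OF hyp surj2 _ au[OF that]] ac that by blast
  have iTe: "Te e (iota d)" for e d unfolding Te_def phi_iota by (simp add: sc_pos)
  have nB: "\<not> (\<forall>i<m. Te e (a i))" for e
  proof
    assume all: "\<forall>i<m. Te e (a i)"
    have "\<forall>h\<in>iota ` UNIV \<union> a ` {..<m}. h \<in> carrier S \<and> Te e h"
      using iota_carrier iTe ac all by auto
    from claimB[OF this] fg show False by blast
  qed
  obtain i where i: "i < m" "\<not> Te True (a i)" using nB[of True] by blast
  obtain j where j: "j < m" "\<not> Te False (a j)" using nB[of False] by blast
  have tiF: "Te False (a i)" using Aor[OF i(1)] i(2) by blast
  have tjT: "Te True (a j)" using Aor[OF j(1)] j(2) by blast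
  have ij: "i \<noteq> j" using i(2) tjT by blast
  have aic: "a i \<in> carrier S" and ajc: "a j \<in> carrier S" using ac i j by auto
  have aij: "a i \<otimes>\<^bsub>S\<^esub> a j = a j \<otimes>\<^bsub>S\<^esub> a i" using acomm i j by blast
  define ci where "ci = phi (a i) (0,0)"
  define cj where "cj = phi (a j) (0,0)"
  define ei :: "nat \<Rightarrow> nat" where "ei = (\<lambda>k. if k = i then 1 else 0)"
  define ej :: "nat \<Rightarrow> nat" where "ej = (\<lambda>k. if k = j then 1 else 0)"
  define eij :: "nat \<Rightarrow> nat" where "eij = (\<lambda>k. if k = i \<or> k = j then 1 else 0)"
  define z :: "nat \<Rightarrow> nat" where "z = (\<lambda>k. 0)"
  have d1: "eij \<noteq> ei" using fun_cong[of eij ei j] ij unfolding eij_def ei_def by auto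
  have d2: "eij \<noteq> ej" using fun_cong[of eij ej i] ij unfolding eij_def ej_def by auto
  have d3: "eij \<noteq> z" using fun_cong[of eij z i] unfolding eij_def z_def by auto
  have d4: "ei \<noteq> ej" using fun_cong[of ei ej i] ij unfolding ei_def ej_def by auto
  have d5: "ei \<noteq> z" using fun_cong[of ei z i] unfolding ei_def z_def by auto
  have d6: "ej \<noteq> z" using fun_cong[of ej z j] unfolding ej_def z_def by auto
  define c where "c = (\<lambda>\<alpha>. if \<alpha> = eij then 1 else if \<alpha> = ei then - \<tau> i cj
      else if \<alpha> = ej then - ci else ci * cj)"
  define A where "A = {eij, ei, ej, z}"
  have mij: "monomial_in S m a eij = a i \<otimes>\<^bsub>S\<^esub> a j"
    using mono_two[OF i(1) j(1) ij ac aij, of eij] aic ajc unfolding eij_def by simp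
  have mi: "monomial_in S m a ei = a i"
    using mono_two[OF i(1) j(1) ij ac aij, of ei] aic ajc ij unfolding ei_def by simp
  have mj: "monomial_in S m a ej = a j"
    using mono_two[OF i(1) j(1) ij ac aij, of ej] aic ajc ij unfolding ej_def by simp
  have mz: "monomial_in S m a z = \<one>\<^bsub>S\<^esub>"
    using mono_two[OF i(1) j(1) ij ac aij, of z] aic ajc unfolding z_def by simp
  define F where "F = (\<lambda>\<alpha>. iota (c \<alpha>) \<otimes>\<^bsub>S\<^esub> monomial_in S m a \<alpha>)"
  have F1: "F eij = a i \<otimes>\<^bsub>S\<^esub> a j"
    unfolding F_def mij c_def using iota_one aic ajc by simp
  have F2: "F ei = \<ominus>\<^bsub>S\<^esub> (iota (\<tau> i cj) \<otimes>\<^bsub>S\<^esub> a i)"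
    unfolding F_def mi c_def using d1 iota_neg l_minus[OF iota_carrier aic] by simp
  have F3: "F ej = \<ominus>\<^bsub>S\<^esub> (iota ci \<otimes>\<^bsub>S\<^esub> a j)"
    unfolding F_def mj c_def using d2 d4 iota_neg l_minus[OF iota_carrier ajc] by simp
  have F4: "F z = iota ci \<otimes>\<^bsub>S\<^esub> iota cj"
    unfolding F_def mz c_def using d3 d5 d6 iota_mult iota_carrier by simp
  have Fc: "F \<in> A \<rightarrow> carrier S"
    unfolding A_def using F1 F2 F3 F4 aic ajc iota_carrier by auto
  have "finsum S F A = \<zero>\<^bsub>S\<^esub>"
  proof (rule phi_inj)
    show "finsum S F A \<in> carrier S" using Fc by simp
    show "\<zero>\<^bsub>S\<^esub> \<in> carrier S" by simp
    show "phi (finsum S F A) = phi \<zero>\<^bsub>S\<^esub>"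
    proof (rule ext)
      fix w
      have "phi (finsum S F A) w = (\<Sum>\<alpha>\<in>A. phi (F \<alpha>) w)"
        by (rule phi_finsum) (use Fc in \<open>auto simp: A_def\<close>)
      also have "\<dots> = phi (F eij) w + (phi (F ei) w + (phi (F ej) w + phi (F z) w))"
        unfolding A_def using d1 d2 d3 d4 d5 d6 by simp
      also have "\<dots> = 0"
        unfolding F1 F2 F3 F4
        using claimC[OF aic ajc au[OF i(1)] tiF tjT, of w] aic ajc iota_carrier
        unfolding ci_def[symmetric] cj_def[symmetric]
        by (simp add: phi_neg)
      finally show "phi (finsum S F A) w = phi \<zero>\<^bsub>S\<^esub> w" using phi_zero by simp
    qed
  qed
  moreover have "finite A" unfolding A_def by simp
  moreover have "A \<subseteq> {\<alpha>. \<forall>k\<ge>m. \<alpha> k = 0}"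
    unfolding A_def eij_def ei_def ej_def z_def using i(1) j(1) by auto
  ultimately have "\<forall>\<alpha>\<in>A. c \<alpha> = 0"
    using ind unfolding left_alg_indep_def F_def by blast
  then have "c eij = 0" unfolding A_def by simp
  moreover have "c eij = 1" unfolding c_def by simp
  ultimately show False by simp
qed

end

theorem proposition5p11:
  fixes s1 s2 :: "'a::division_ring \<Rightarrow> 'a"
  assumes "ring_automorphism s1" and "ring_automorphism s2"
    and "s1 \<circ> s2 = s2 \<circ> s1"
    and "\<forall>k1 k2::nat. 0 < k1 \<longrightarrow> 0 < k2 \<longrightarrow>
           \<not> inner_automorphism ((s1 ^^ k1) \<circ> (inv_into UNIV s2 ^^ k2))"
  shows "\<not> aut_normalizable_pair s1 s2"
proof
  interpret skewctx s1 s2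
    using assms(1-3) unfolding ring_automorphism_def by unfold_locales auto
  assume an: "aut_normalizable_pair s1 s2"
  have oc: "\<one>\<^bsub>R\<^esub> \<in> carrier R" by (rule monoid.one_closed[OF ring.is_monoid[OF ring_R]])
  have "Iax \<noteq> carrier R" using oc one_notin_I by blast
  then have "automorphically_normalizable S (\<lambda>d. Iax +>\<^bsub>R\<^esub> skew_const d)"
    using an ideal_I unfolding aut_normalizable_pair_def by blast
  moreover have "(\<lambda>d. Iax +>\<^bsub>R\<^esub> skew_const d) = iota" by (rule ext) (simp add: iota_def)
  ultimately have "automorphically_normalizable S iota" by simp
  moreover have "surj s2" using assms(2) unfolding ring_automorphism_def bij_def by blast
  ultimately show False using main_loc[OF assms(4)] by blast
qed

end
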